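(* Consider a Gaussian linear concentration model on a subspace $L\subseteq\mathrm{Sym}(p)$ with $I_p\in L$, and let $W$ be a positive semidefinite matrix (e.g. $W=n^{-1}\sum_ix^i(x^i)^\top$). If the score matching equation $\Pi_L(K\circ W)=I_p$ has a unique solution $K\in L$ (equivalently, the linear map $K\mapsto\Pi_L(K\circ W)$ on $L$ has trivial kernel), then the maximum likelihood estimate exists, i.e. $\ell(K)=\log\det K-\operatorname{tr}(KW)$ attains its maximum on $L\cap\mathrm{Sym}_+(p)$.
   Context: $\mathrm{Sym}(p)$: real symmetric $p\times p$ matrices with trace inner product; $\mathrm{Sym}_+(p)$: positive definite elements; $\Pi_L$: orthogonal projection onto $L$; $A\circ B=(AB^\top+BA^\top)/2$. The model is $\{N_p(0,K^{-1}):K\in L\cap\mathrm{Sym}_+(p)\}$. *)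

theory Defs
  imports "HOL-Analysis.Analysis"
begin

type_synonym 'n mat = "real^'n^'n"

definition Sym :: "'n::finite mat set" where
  "Sym = {A. transpose A = A}"

definition pos_def :: "'n::finite mat \<Rightarrow> bool" where
  "pos_def A \<longleftrightarrow> transpose A = A \<and> (\<forall>x. x \<noteq> 0 \<longrightarrow> x \<bullet> (A *v x) > 0)"

definition Sym_plus :: "'n::finite mat set" where
  "Sym_plus = {A. pos_def A}"

definition pos_semidef :: "'n::finite mat \<Rightarrow> bool" where
  "pos_semidef A \<longleftrightarrow> transpose A = A \<and> (\<forall>x. x \<bullet> (A *v x) \<ge> 0)"

definition tr_inner :: "'n::finite mat \<Rightarrow> 'n mat \<Rightarrow> real" where
  "tr_inner A B = trace (A ** transpose B)"

definition proj :: "'n::finite mat set \<Rightarrow> 'n mat \<Rightarrow> 'n mat" where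
  "proj L X = (THE Y. Y \<in> L \<and> (\<forall>Z\<in>L. tr_inner (X - Y) Z = 0))"

definition circ_prod :: "'n::finite mat \<Rightarrow> 'n mat \<Rightarrow> 'n mat" where
  "circ_prod A B = (1/2) *\<^sub>R (A ** transpose B + B ** transpose A)"

definition loglik :: "'n::finite mat \<Rightarrow> 'n mat \<Rightarrow> real" where
  "loglik W K = ln (det K) - trace (K ** W)"

end

theory Submission imports Defs begin

definition outer :: "real^'n::finite \<Rightarrow> real^'n \<Rightarrow> real^'n^'n" where
  "outer u v = (\<chi> j k. u$j * v$k)"

lemma sym_inner: "transpose (B::real^'n::finite^'n) = B \<Longrightarrow> x \<bullet> (B *v y) = y \<bullet> (B *v x)"
  by (metis dot_lmul_matrix inner_commute vector_transpose_matrix)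

lemma quad_expand:
  fixes B :: "real^'n::finite^'n"
  assumes "transpose B = B"
  shows "(x + t *\<^sub>R y) \<bullet> (B *v (x + t *\<^sub>R y)) = x \<bullet> (B *v x) + 2*t*(y \<bullet> (B *v x)) + t^2 * (y \<bullet> (B *v y))"
  using sym_inner[OF assms, of x y]
  by (simp add: matrix_vector_right_distrib matrix_vector_mult_scaleR inner_add_left inner_add_right
      algebra_simps power2_eq_square)

lemma mv_axis: "((B::real^'n::finite^'n) *v axis i 1) $ j = B$j$i"
  by (simp add: matrix_vector_mult_def axis_def if_distrib cong: if_cong)

lemma quad_axis: "axis i 1 \<bullet> ((B::real^'n::finite^'n) *v axis i 1) = B$i$i"
  by (simp add: inner_axis' mv_axis)

lemma psd_diag: "pos_semidef (B::real^'n::finite^'n) \<Longrightarrow> B$i$i \<ge> 0"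
  by (metis pos_semidef_def quad_axis)

lemma psd_zero:
  fixes A :: "real^'n::finite^'n"
  assumes "pos_semidef A" "x \<bullet> (A *v x) = 0"
  shows "A *v x = 0"
proof -
  have sym: "transpose A = A" and q: "\<And>z. z \<bullet> (A *v z) \<ge> 0" using assms(1) by (auto simp: pos_semidef_def)
  define y where "y = A *v x"
  define b where "b = y \<bullet> (A *v x)"
  define d where "d = y \<bullet> (A *v y)"
  have d0: "d \<ge> 0" using q by (simp add: d_def)
  have key: "\<And>t. 0 \<le> 2*t*b + t^2*d"
    using q quad_expand[OF sym] assms(2) unfolding b_def d_def by (metis add_0)
  have "b = 0"
  proof (cases "d = 0")
    case True
    with key[of "-b"] have "b*b \<le> 0" by (simp add: power2_eq_square)
    thus ?thesis by (metis mult_eq_0_iff order_antisym zero_le_square)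
  next
    case False
    with d0 have dp: "d > 0" by simp
    have "0 \<le> 2*(-b/d)*b + (-b/d)^2*d" by (rule key)
    also have "\<dots> = - (b^2/d)" using dp by (simp add: field_simps power2_eq_square)
    finally have "b^2/d \<le> 0" by simp
    with dp have "b^2 \<le> 0" by (simp add: divide_le_0_iff)
    thus ?thesis by simp
  qed
  thus ?thesis unfolding b_def y_def by simp
qed

lemma trace_outer: "trace (outer u v) = u \<bullet> v"
  by (simp add: trace_def outer_def inner_vec_def)

lemma mult_outer: "(A::real^'n::finite^'n) ** outer u v = outer (A *v u) v"
  by (simp add: vec_eq_iff outer_def matrix_matrix_mult_def matrix_vector_mult_def sum_distrib_right mult.assoc)

lemma outer_0: "outer 0 v = 0" by (simp add: vec_eq_iff outer_def)

lemma quad_outer: "x \<bullet> (outer u u *v x) = (u \<bullet> x)^2"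
  by (simp add: outer_def inner_vec_def matrix_vector_mult_def power2_eq_square sum_distrib_left sum_distrib_right mult_ac)

lemma psd_trace:
  fixes A B :: "real^'n::finite^'n"
  assumes A: "pos_semidef A" and "pos_semidef B"
  shows "trace (A ** B) \<ge> 0 \<and> (trace (A ** B) = 0 \<longrightarrow> A ** B = 0)"
  using assms(2)
proof (induction "card {j. B$j$j \<noteq> 0}" arbitrary: B rule: less_induct)
  case less
  have symB: "transpose B = B" and qB: "\<And>z. z \<bullet> (B *v z) \<ge> 0"
    using less.prems by (auto simp: pos_semidef_def)
  have colz: "B$k$j = 0" if "B$j$j = 0" for j k
  proof -
    have "B *v axis j 1 = 0" using psd_zero[OF less.prems] quad_axis that by metis
    hence "(B *v axis j 1)$k = 0" by simp
    thus ?thesis by (simp add: mv_axis)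
  qed
  show ?case
  proof (cases "{j. B$j$j \<noteq> 0} = {}")
    case True
    then have "B = 0" using colz by (auto simp: vec_eq_iff)
    thus ?thesis by (simp add: trace_def matrix_matrix_mult_def vec_eq_iff)
  next
    case False
    then obtain i where bi: "B$i$i \<noteq> 0" by auto
    define b where "b = B$i$i"
    have bpos: "b > 0" using psd_diag[OF less.prems, of i] bi by (simp add: b_def)
    define u where "u = B *v axis i 1"
    have uj: "u$j = B$j$i" for j by (simp add: u_def mv_axis)
    define B' where "B' = B - (1/b) *\<^sub>R outer u u"
    have B'jk: "B'$j$k = B$j$k - u$j*u$k/b" for j k by (simp add: B'_def outer_def)
    have Bsym: "B$j$k = B$k$j" for j k by (metis symB transpose_def vec_lambda_beta)
    have symB': "transpose B' = B'"
      unfolding vec_eq_iff transpose_def vec_lambda_beta B'jk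
      by (metis Bsym mult.commute)
    have psdB': "pos_semidef B'"
      unfolding pos_semidef_def
    proof (intro conjI allI symB')
      fix x :: "real^'n"
      define s where "s = u \<bullet> x"
      have s2: "s = x \<bullet> (B *v axis i 1)" by (simp add: s_def u_def inner_commute)
      have "0 \<le> (x + (-s/b) *\<^sub>R axis i 1) \<bullet> (B *v (x + (-s/b) *\<^sub>R axis i 1))" by (rule qB)
      also have "\<dots> = x \<bullet> (B *v x) + 2*(-s/b) * s + (-s/b)^2 * b"
        using quad_expand[OF symB, of x "-s/b" "axis i 1"] sym_inner[OF symB, of "axis i 1" x] s2[symmetric] quad_axis[of i B]
        by (simp add: b_def)
      also have "\<dots> = x \<bullet> (B *v x) - s^2/b" using bpos by (simp add: field_simps power2_eq_square)
      finally have "s^2/b \<le> x \<bullet> (B *v x)" by simp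
      moreover have "x \<bullet> (B' *v x) = x \<bullet> (B *v x) - s^2/b"
        unfolding B'_def using quad_outer[of x u]
        by (simp add: matrix_vector_mult_diff_rdistrib scaleR_matrix_vector_assoc[symmetric] inner_diff_right s_def)
      ultimately show "0 \<le> x \<bullet> (B' *v x)" by simp
    qed
    have sub: "{j. B'$j$j \<noteq> 0} \<subseteq> {j. B$j$j \<noteq> 0} - {i}"
    proof
      fix j assume "j \<in> {j. B'$j$j \<noteq> 0}"
      hence j: "B'$j$j \<noteq> 0" by simp
      have "j \<noteq> i" using j bpos by (auto simp: B'jk uj b_def power2_eq_square)
      moreover have "B$j$j \<noteq> 0" using j colz[of j i] Bsym[of j i] by (auto simp: B'jk uj)
      ultimately show "j \<in> {j. B$j$j \<noteq> 0} - {i}" by simp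
    qed
    have "card {j. B'$j$j \<noteq> 0} < card {j. B$j$j \<noteq> 0}"
      by (rule psubset_card_mono) (use sub bi in auto)
    from less.hyps[OF this psdB'] have IH:
      "trace (A ** B') \<ge> 0 \<and> (trace (A ** B') = 0 \<longrightarrow> A ** B' = 0)" .
    have BB: "B = B' + (1/b) *\<^sub>R outer u u" by (simp add: B'_def)
    have dec: "A ** B = A ** B' + (1/b) *\<^sub>R outer (A *v u) u"
      unfolding BB matrix_add_ldistrib mult_outer[symmetric]
      by (simp add: vec_eq_iff matrix_matrix_mult_def sum_distrib_left mult_ac)
    have tr: "trace (A ** B) = trace (A ** B') + (1/b) * (u \<bullet> (A *v u))"
      unfolding dec trace_add by (simp add: trace_def outer_def inner_vec_def sum_distrib_left mult_ac)
    have qA: "u \<bullet> (A *v u) \<ge> 0" using A by (simp add: pos_semidef_def)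
    show ?thesis
    proof
      show "trace (A ** B) \<ge> 0" using tr IH qA bpos by simp
      show "trace (A ** B) = 0 \<longrightarrow> A ** B = 0"
      proof
        assume 0: "trace (A ** B) = 0"
        have "(1/b) * (u \<bullet> (A *v u)) \<ge> 0" using qA bpos by simp
        hence t1: "trace (A ** B') = 0" and t2: "(1/b) * (u \<bullet> (A *v u)) = 0" using 0 tr IH by linarith+
        have "u \<bullet> (A *v u) = 0" using t2 bpos by simp
        hence "A *v u = 0" by (rule psd_zero[OF A])
        thus "A ** B = 0" using IH t1 by (simp add: dec outer_0)
      qed
    qed
  qed
qed

lemma cont_tp: "continuous_on S (\<lambda>K::real^'n::finite^'n. transpose K)"
  unfolding transpose_def by (intro continuous_intros)

lemma cont_q: "continuous_on S (\<lambda>K::real^'n::finite^'n. x \<bullet> (K *v x))"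
  unfolding inner_vec_def matrix_vector_mult_def by (simp; intro continuous_intros)

lemma closed_psd: "closed {K::real^'n::finite^'n. pos_semidef K}"
proof -
  have "{K::real^'n^'n. pos_semidef K} = {K. transpose K = K} \<inter> (\<Inter>x. {K. 0 \<le> x \<bullet> (K *v x)})"
    by (auto simp: pos_semidef_def)
  moreover have "closed {K::real^'n^'n. transpose K = K}"
    by (intro closed_Collect_eq cont_tp continuous_on_id continuous_on_id')
  moreover have "closed {K::real^'n^'n. 0 \<le> x \<bullet> (K *v x)}" for x
    by (intro closed_Collect_le continuous_on_const cont_q)
  ultimately show ?thesis by (auto intro!: closed_INT)
qed

lemma psd_scale: "c \<ge> 0 \<Longrightarrow> pos_semidef K \<Longrightarrow> pos_semidef (c *\<^sub>R (K::real^'n::finite^'n))"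
  by (simp add: pos_semidef_def transpose_scalar scaleR_matrix_vector_assoc[symmetric])

lemma trace_scale: "trace ((c *\<^sub>R K) ** (W::real^'n::finite^'n)) = c * trace (K ** W)"
  by (simp add: trace_def matrix_matrix_mult_def sum_distrib_left mult.assoc)

lemma det_bound:
  fixes K :: "real^'n::finite^'n"
  shows "\<bar>det K\<bar> \<le> real (card {p. p permutes (UNIV::'n set)}) * norm K ^ CARD('n)"
proof -
  have "\<bar>det K\<bar> \<le> (\<Sum>p\<in>{p. p permutes (UNIV::'n set)}. \<bar>of_int (sign p) * (\<Prod>i\<in>UNIV. K$i$p i)\<bar>)"
    unfolding det_def by (rule sum_abs)
  also have "\<dots> \<le> (\<Sum>p\<in>{p. p permutes (UNIV::'n set)}. norm K ^ CARD('n))"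
  proof (rule sum_mono)
    fix p
    have "\<bar>of_int (sign p) * (\<Prod>i\<in>UNIV. K$i$p i)\<bar> = (\<Prod>i\<in>UNIV. \<bar>K$i$p i\<bar>)"
      by (simp add: abs_mult abs_prod sign_def)
    also have "\<dots> \<le> (\<Prod>i\<in>(UNIV::'n set). norm K)"
    proof (rule prod_mono)
      fix i
      have "\<bar>K$i$p i\<bar> \<le> norm (K$i)" by (rule component_le_norm_cart)
      also have "\<dots> \<le> norm K" by (rule Finite_Cartesian_Product.norm_nth_le)
      finally show "0 \<le> \<bar>K$i$p i\<bar> \<and> \<bar>K$i$p i\<bar> \<le> norm K" by simp
    qed
    also have "\<dots> = norm K ^ CARD('n)" by simp
    finally show "\<bar>of_int (sign p) * (\<Prod>i\<in>UNIV. K$i$p i)\<bar> \<le> norm K ^ CARD('n)" .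
  qed
  also have "\<dots> = real (card {p. p permutes (UNIV::'n set)}) * norm K ^ CARD('n)" by simp
  finally show ?thesis .
qed

lemma det_nz_ker: "det (K::real^'n::finite^'n) \<noteq> 0 \<Longrightarrow> K *v x = 0 \<Longrightarrow> x = 0"
  by (metis invertible_det_nz invertible_def matrix_vector_mul_assoc matrix_vector_mul_lid matrix_vector_mult_0_right)

lemma circ_add: "circ_prod (X + Y) W = circ_prod X W + circ_prod Y (W::real^'n::finite^'n)"
  by (simp add: circ_prod_def vec_eq_iff matrix_matrix_mult_def transpose_def sum.distrib algebra_simps)

lemma circ_zero:
  assumes "transpose K = K" "transpose W = W" "K ** W = (0::real^'n::finite^'n)"
  shows "circ_prod K W = 0"
proof -
  have t0: "transpose (0::real^'n^'n) = 0" by (simp add: transpose_def vec_eq_iff)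
  have "W ** K = transpose (K ** W)" using assms(1,2) by (simp add: matrix_transpose_mul)
  hence "W ** K = 0" using assms(3) t0 by simp
  thus ?thesis using assms by (simp add: circ_prod_def)
qed

lemma cont_det: "continuous_on S (\<lambda>K::real^'n::finite^'n. det K)"
  unfolding det_def by (intro continuous_intros)
lemma cont_tr: "continuous_on S (\<lambda>K::real^'n::finite^'n. trace (K ** W))"
  unfolding trace_def matrix_matrix_mult_def by (simp; intro continuous_intros)

lemma pd_det_pos:
  fixes K :: "real^'n::finite^'n"
  assumes "pos_def K"
  shows "det K > 0"
proof (rule ccontr)
  assume "\<not> det K > 0"
  define f where "f = (\<lambda>t::real. det ((1-t) *\<^sub>R mat 1 + t *\<^sub>R K))"
  have "f 1 \<le> 0" using \<open>\<not> det K > 0\<close> by (simp add: f_def)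
  moreover have "0 \<le> f 0" by (simp add: f_def)
  moreover have "\<forall>t. 0 \<le> t \<and> t \<le> 1 \<longrightarrow> isCont f t"
    unfolding f_def det_def by (intro allI impI continuous_intros)
  ultimately obtain t where t: "0 \<le> t" "t \<le> 1" "f t = 0" using IVT2[of f 1 0 0] by auto
  obtain x :: "real^'n" where x: "x \<noteq> 0" "((1-t) *\<^sub>R mat 1 + t *\<^sub>R K) *v x = 0"
  proof -
    have "rank ((1-t) *\<^sub>R mat 1 + t *\<^sub>R K) \<noteq> CARD('n)" using t(3) det_eq_0_rank[of "(1-t) *\<^sub>R mat 1 + t *\<^sub>R K"] unfolding f_def by auto
    then show ?thesis using that matrix_nonfull_linear_equations_eq by blast
  qed
  have q: "x \<bullet> (K *v x) > 0" using assms x(1) by (simp add: pos_def_def)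
  have "x \<bullet> (((1-t) *\<^sub>R mat 1 + t *\<^sub>R K) *v x) = (1-t) * (x \<bullet> x) + t * (x \<bullet> (K *v x))"
    by (simp add: matrix_vector_mult_add_rdistrib scaleR_matrix_vector_assoc[symmetric] inner_add_right)
  moreover have "(1-t) * (x \<bullet> x) + t * (x \<bullet> (K *v x)) > 0"
  proof (cases "t = 0")
    case True thus ?thesis using x(1) by simp
  next
    case False
    hence "t * (x \<bullet> (K *v x)) > 0" using t q by simp
    moreover have "(1-t) * (x \<bullet> x) \<ge> 0" using t by simp
    ultimately show ?thesis by linarith
  qed
  ultimately show False using x(2) by simp
qed

theorem proposition3:
  fixes L :: "(real^'n::finite^'n) set" and W :: "real^'n^'n"
  assumes "subspace L" and "L \<subseteq> Sym" and "mat 1 \<in> L"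
    and "pos_semidef W"
    and "\<exists>!K. K \<in> L \<and> proj L (circ_prod K W) = mat 1"
  shows "\<exists>K \<in> L \<inter> Sym_plus. \<forall>K' \<in> L \<inter> Sym_plus. loglik W K' \<le> loglik W K"
proof -
  define p where "p = real CARD('n)"
  have p0: "p > 0" by (simp add: p_def)
  define N where "N = real (card {q. q permutes (UNIV::'n set)})"
  have N1: "N \<ge> 1"
  proof -
    have "finite {q. q permutes (UNIV::'n set)}" by (rule finite_permutations) simp
    moreover have "id \<in> {q. q permutes (UNIV::'n set)}" by simp
    ultimately have "card {q. q permutes (UNIV::'n set)} > 0" using card_gt_0_iff by blast
    thus ?thesis by (simp add: N_def)
  qed
  have detb: "det K \<le> N * norm K ^ CARD('n)" for K :: "real^'n^'n"
    using det_bound[of K] unfolding N_def by linarith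
  have symW: "transpose W = W" using assms(4) by (simp add: pos_semidef_def)
  obtain K1 where K1: "K1 \<in> L" "proj L (circ_prod K1 W) = mat 1"
    and uniq: "\<And>K. K \<in> L \<Longrightarrow> proj L (circ_prod K W) = mat 1 \<Longrightarrow> K = K1"
    using assms(5) by blast
  have nodeg: "K0 = 0" if "K0 \<in> L" "pos_semidef K0" "trace (K0 ** W) = 0" for K0
  proof -
    have z: "K0 ** W = 0" using psd_trace[OF that(2) assms(4)] that(3) by blast
    have symK0: "transpose K0 = K0" using that(2) unfolding pos_semidef_def by blast
    have cz: "circ_prod K0 W = 0" by (rule circ_zero[OF symK0 symW z])
    have inL: "K1 + K0 \<in> L" using subspace_add assms(1) K1(1) that(1) by blast
    have eqc: "circ_prod (K1+K0) W = circ_prod K1 W" unfolding circ_add[of K1 K0 W] cz by simp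
    have "proj L (circ_prod (K1+K0) W) = mat 1" unfolding eqc by (rule K1(2))
    hence "K1 + K0 = K1" by (rule uniq[OF inL])
    thus ?thesis by simp
  qed
  have closedL: "closed L" using closed_subspace[OF assms(1)] .
  define C where "C = {K. K \<in> L \<and> pos_semidef K \<and> norm K = 1}"
  have "compact C"
  proof -
    have eq: "C = L \<inter> {K. pos_semidef K} \<inter> sphere 0 1" by (auto simp: C_def)
    have "closed C" unfolding eq using closedL closed_psd by (intro closed_Int closed_sphere) auto
    moreover have "bounded C" unfolding eq by (meson bounded_Int bounded_sphere)
    ultimately show ?thesis using compact_eq_bounded_closed by blast
  qed
  have psdI: "pos_semidef (mat 1 :: real^'n^'n)" by (simp add: pos_semidef_def)
  have I0: "(mat 1 :: real^'n^'n) \<noteq> 0"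
  proof
    assume "(mat 1 :: real^'n^'n) = 0"
    hence "(mat 1 :: real^'n^'n) $ undefined $ undefined = 0" by simp
    thus False by (simp add: mat_def)
  qed
  have "(1 / norm (mat 1 :: real^'n^'n)) *\<^sub>R mat 1 \<in> C"
    unfolding C_def using assms(1,3) I0 psdI
    by (auto intro: subspace_scale psd_scale)
  hence "C \<noteq> {}" by blast
  obtain K0 where K0: "K0 \<in> C" and K0min: "\<And>K. K \<in> C \<Longrightarrow> trace (K0 ** W) \<le> trace (K ** W)"
    using continuous_attains_inf[OF \<open>compact C\<close> \<open>C \<noteq> {}\<close> cont_tr[of C W]] by blast
  define c where "c = trace (K0 ** W)"
  have "c \<ge> 0" using psd_trace[of K0 W] K0 assms(4) by (simp add: C_def c_def)
  moreover have "c \<noteq> 0"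
  proof
    assume "c = 0"
    hence "K0 = 0" using nodeg K0 by (simp add: C_def c_def)
    thus False using K0 by (simp add: C_def)
  qed
  ultimately have c0: "c > 0" by simp
  have lower: "c * norm K \<le> trace (K ** W)" if K: "K \<in> L" "pos_semidef K" for K
  proof (cases "K = 0")
    case True thus ?thesis by (simp add: trace_def matrix_matrix_mult_def)
  next
    case False
    hence n0: "norm K > 0" by simp
    have "(1 / norm K) *\<^sub>R K \<in> C"
      unfolding C_def using K n0 assms(1) by (auto intro: subspace_scale psd_scale)
    hence "c \<le> trace (((1 / norm K) *\<^sub>R K) ** W)" using K0min c_def by blast
    also have "\<dots> = trace (K ** W) / norm K" by (simp add: trace_scale)
    finally show ?thesis using n0 by (simp add: field_simps)
  qed
  define a where "a = loglik W (mat 1)"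
  define e where "e = c / (2*p)"
  have e0: "e > 0" using c0 p0 by (simp add: e_def)
  define R where "R = 2*(ln N - a - p - p*ln e)/c"
  have bound: "norm K \<le> R \<and> exp a \<le> det K"
    if K: "K \<in> L" "pos_semidef K" "det K > 0" "a \<le> loglik W K" for K
  proof -
    define r where "r = norm K"
    have tr: "c * r \<le> trace (K ** W)" using lower K by (simp add: r_def)
    have lnd: "a + c*r \<le> ln (det K)" using K(4) tr by (simp add: loglik_def)
    have "c * r \<ge> 0" using c0 by (simp add: r_def)
    hence "a \<le> ln (det K)" using lnd by simp
    hence ea: "exp a \<le> det K" using K(3) by (metis exp_le_cancel_iff exp_ln)
    have r0: "r > 0"
    proof (rule ccontr)
      assume "\<not> r > 0"
      hence "K = 0" by (simp add: r_def)
      hence "det K \<le> 0" using detb[of K] by (simp add: power_0_left)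
      thus False using K(3) by simp
    qed
    have "det K \<le> N * r ^ CARD('n)" using detb by (simp add: r_def)
    hence "ln (det K) \<le> ln (N * r ^ CARD('n))" using K(3) by simp
    also have "\<dots> = ln N + p * ln r" using N1 r0 by (simp add: ln_mult ln_realpow p_def)
    finally have l1: "ln (det K) \<le> ln N + p * ln r" .
    have "ln (e * r) \<le> e * r - 1" using e0 r0 by (intro ln_le_minus_one) simp
    hence "ln r \<le> e * r - 1 - ln e" using e0 r0 by (simp add: ln_mult)
    hence "p * ln r \<le> p * (e * r - 1 - ln e)" using p0 by (simp add: mult_left_mono)
    also have "\<dots> = c * r / 2 - p - p * ln e" using p0 by (simp add: e_def field_simps)
    finally have "a + c * r \<le> ln N + c * r / 2 - p - p * ln e" using lnd l1 by linarith
    hence "c * r / 2 \<le> ln N - a - p - p * ln e" by linarith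
    hence "r \<le> R" using c0 by (simp add: R_def field_simps)
    thus ?thesis using ea by (simp add: r_def)
  qed
  define f where "f K = ln (max (exp a) (det K)) - trace (K ** W)" for K :: "real^'n^'n"
  have maxne: "max (exp a) (det K) \<noteq> 0" for K :: "real^'n^'n"
    by (metis exp_gt_zero less_max_iff_disj less_irrefl)
  have contf: "continuous_on S f" for S
    unfolding f_def using maxne
    by (intro continuous_on_diff continuous_on_ln continuous_on_max continuous_on_const cont_det cont_tr) auto
  have fl: "f K = loglik W K" if "exp a \<le> det K" for K
    using that by (simp add: f_def loglik_def max_def)
  define T where "T = {K. K \<in> L \<and> pos_semidef K \<and> norm K \<le> R \<and> exp a \<le> det K \<and> a \<le> f K}"
  have "compact T"
  proof -
    have eq: "T = L \<inter> {K. pos_semidef K} \<inter> cball 0 R \<inter> {K. exp a \<le> det K} \<inter> {K. a \<le> f K}"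
      by (auto simp: T_def)
    have "closed T" unfolding eq using closedL closed_psd
      by (intro closed_Int closed_cball closed_Collect_le continuous_on_const cont_det contf) auto
    moreover have "bounded T" unfolding eq by (meson bounded_Int bounded_cball)
    ultimately show ?thesis using compact_eq_bounded_closed by blast
  qed
  have aI: "a = - trace W" by (simp add: a_def loglik_def)
  have "f (mat 1) = a \<and> mat 1 \<in> T"
  proof -
    have b: "norm (mat 1 :: real^'n^'n) \<le> R \<and> exp a \<le> det (mat 1 :: real^'n^'n)"
      using bound[OF assms(3) psdI] by (simp add: a_def)
    hence "f (mat 1) = a" using fl by (simp add: a_def)
    thus "f (mat 1) = a \<and> mat 1 \<in> T" using b assms(3) psdI by (simp add: T_def)
  qed
  hence fI: "f (mat 1) = a" and IT: "mat 1 \<in> T" by auto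
  hence "T \<noteq> {}" by blast
  obtain Ks where Ks: "Ks \<in> T" and Ksmax: "\<And>K. K \<in> T \<Longrightarrow> f K \<le> f Ks"
    using continuous_attains_sup[OF \<open>compact T\<close> \<open>T \<noteq> {}\<close> contf] by blast
  have expKs: "exp a \<le> det Ks" using Ks unfolding T_def by blast
  hence Ksdet: "det Ks > 0" using exp_gt_zero[of a] by linarith
  have "pos_def Ks"
    unfolding pos_def_def
  proof (intro conjI allI impI)
    show "transpose Ks = Ks" using Ks unfolding T_def pos_semidef_def by blast
    fix x :: "real^'n" assume x: "x \<noteq> 0"
    have ge: "x \<bullet> (Ks *v x) \<ge> 0" using Ks unfolding T_def pos_semidef_def by blast
    have "x \<bullet> (Ks *v x) \<noteq> 0"
    proof
      assume "x \<bullet> (Ks *v x) = 0"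
      moreover have "pos_semidef Ks" using Ks unfolding T_def by blast
      ultimately have "Ks *v x = 0" using psd_zero by blast
      moreover have "det Ks \<noteq> 0" using Ksdet by simp
      ultimately have "x = 0" using det_nz_ker by blast
      thus False using x by simp
    qed
    thus "x \<bullet> (Ks *v x) > 0" using ge by simp
  qed
  have fKs: "f Ks = loglik W Ks" by (rule fl[OF expKs])
  show ?thesis
  proof (intro bexI ballI)
    have "Ks \<in> L" using Ks unfolding T_def by blast
    thus "Ks \<in> L \<inter> Sym_plus" using \<open>pos_def Ks\<close> unfolding Sym_plus_def by blast
    fix K' assume K': "K' \<in> L \<inter> Sym_plus"
    hence pd: "pos_def K'" and KL: "K' \<in> L" by (auto simp: Sym_plus_def)
    have psd: "pos_semidef K'"
      unfolding pos_semidef_def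
    proof (intro conjI allI)
      show "transpose K' = K'" using pd by (simp add: pos_def_def)
      fix x :: "real^'n"
      show "0 \<le> x \<bullet> (K' *v x)"
        using pd by (cases "x = 0") (auto simp: pos_def_def less_imp_le)
    qed
    have dp: "det K' > 0" using pd_det_pos[OF pd] .
    show "loglik W K' \<le> loglik W Ks"
    proof (cases "a \<le> loglik W K'")
      case True
      from bound[OF KL psd dp True] have b: "norm K' \<le> R" "exp a \<le> det K'" by auto
      hence "f K' = loglik W K'" using fl by simp
      hence "K' \<in> T" using b KL psd True unfolding T_def by simp
      hence "f K' \<le> f Ks" by (rule Ksmax)
      thus ?thesis using \<open>f K' = loglik W K'\<close> fKs by simp
    next
      case False
      have "f (mat 1) = a" using fI .
      hence "a \<le> f Ks" using Ksmax[OF IT] by simp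
      thus ?thesis using False fKs by simp
    qed
  qed
qed

end
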